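(* In the setting below, under one of the mechanisms (g), (mp), (mn) with corresponding label $\square$, for each $1\le k\le n_1$ let $\mathcal I^\alpha_{\texttt t,k}=\{c\in\mathbb R:\tilde p^{\square}_{\texttt t,k,c}>\alpha\}$. Then $\mathcal I^\alpha_{\texttt t,k}$ is a $1-\alpha$ prediction set for $\tau_{\texttt t(k)}$ (i.e. $\mathbb P(\tau_{\texttt t(k)}\in\mathcal I^\alpha_{\texttt t,k})\ge1-\alpha$), it is a one-sided interval of the form $[\hat\tau_{\texttt t(k)},\infty)$ or $(\hat\tau_{\texttt t(k)},\infty)$ with $\hat\tau_{\texttt t(k)}=\inf\mathcal I^\alpha_{\texttt t,k}$, and these sets are simultaneously valid: $\mathbb P\big(\tau_{\texttt t(k)}\in\mathcal I^\alpha_{\texttt t,k}\text{ for all }1\le k\le n_1\big)\ge1-\alpha$.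
   Context: There are $n$ units with fixed potential outcomes $Y_i^\star(0),Y_i^\star(1)\in\mathbb R$ and fixed potential missingness indicators $M_i(0),M_i(1)\in\{0,1\}$; $\tau_i=Y_i^\star(1)-Y_i^\star(0)$. $\boldsymbol Z\in\{0,1\}^n$ is from a completely randomized experiment (CRE): uniform over vectors with exactly $n_1$ ones ($n_1,n_0\ge1$ fixed, $n_1+n_0=n$), independent of all potential quantities. $M_i=Z_iM_i(1)+(1-Z_i)M_i(0)$; the realized outcome $Z_iY_i^\star(1)+(1-Z_i)Y_i^\star(0)$ is observed, denoted $Y_i$, iff $M_i=1$. $\tau_{\texttt t(1)}\le\dots\le\tau_{\texttt t(n_1)}$ are the sorted values of $\{\tau_i:Z_i=1\}$. Mechanisms: (g) $M_i(1),M_i(0)$ arbitrary constants; (mp) $M_i(1)\ge M_i(0)$ for all $i$; (mn) $M_i(1)\le M_i(0)$ for all $i$. Statistics: $\overline{\mathbb R}=\mathbb R\cup\{\pm\infty\}$; $\psi_{i,j}(y,y')=\mathbf 1\{y>y'\}+\mathbf 1\{y=y'\}\mathbf 1\{i\ge j\}$; $\mathrm{rank}_i(\boldsymbol y)=\sum_j\psi_{i,j}(y_i,y_j)$; $\phi$ nondecreasing on the nonnegative integers; $t_{\mathrm R,\phi}(\boldsymbol z,\boldsymbol y)$ is either $\sum_i z_i\phi(\mathrm{rank}_i(\boldsymbol y))$ or $\sum_i z_i\phi(\sum_j(1-z_j)\psi_{i,j}(y_i,y_j))$; $G_{\mathrm R,\phi}(c)=\mathbb P(t_{\mathrm R,\phi}(\boldsymbol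 A,\boldsymbol y_0)\ge c)$, $\boldsymbol A$ from the CRE, $\boldsymbol y_0\in\mathbb R^n$ any fixed vector. p-values: for $\boldsymbol\delta\in\mathbb R^n$, $\tilde{\boldsymbol Y}^{\square}_{\boldsymbol Z,\boldsymbol\delta}(0)\in\overline{\mathbb R}^n$ has coordinate $Y_i-\delta_i$ if $Z_i=M_i=1$, $Y_i$ if $Z_i=0,M_i=1$; if $Z_i=1,M_i=0$ it is $-\infty,+\infty,-\infty$ for $\square=\texttt g,\texttt{mp},\texttt{mn}$; if $Z_i=0,M_i=0$ it is $+\infty,+\infty,-\infty$ respectively. With $\mathcal J=\{i:Z_i=M_i=1\}=\{j_1,\dots,j_{n_{11}}\}$ ordered so that $\psi_{j_{l+1},j_l}(Y_{j_{l+1}},Y_{j_l})=1$, $\mathcal J_L=\{j_{n_{11}-L+1},\dots,j_{n_{11}}\}$, $\mathcal J_0=\emptyset$, and fixed $\kappa>0$, let $\xi_{k,c,i}=\max_{l:Z_l=M_l=1}Y_l-\min_{l:Z_l=0,M_l=1}Y_l+\kappa$ for $i\in\mathcal J_{\min\{n_1-k,n_{11}\}}$ and $\xi_{k,c,i}=c$ otherwise; then $\tilde p^{\square}_{\texttt t,k,c}=G_{\mathrm R,\phi}(t_{\mathrm R,\phi}(\boldsymbol Z,\tilde{\boldsymbol Y}^{\square}_{\boldsymbol Z,\boldsymbol\xi_{k,c}}(0)))$. *)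

theory Defs
  imports Complex_Main "HOL-Library.Extended_Real"
begin

text \<open>Units are indexed by 0,...,n-1. An assignment vector Z is represented by its set of
treated units. Missingness indicators are booleans (True = outcome observed).\<close>

datatype mech = Mg | Mmp | Mmn

definition psi :: "nat \<Rightarrow> nat \<Rightarrow> 'a::linorder \<Rightarrow> 'a \<Rightarrow> nat" where
  "psi i j y y' = (if y > y' then 1 else 0) + (if y = y' \<and> i \<ge> j then 1 else 0)"

definition tstat :: "bool \<Rightarrow> (nat \<Rightarrow> real) \<Rightarrow> nat \<Rightarrow> nat set \<Rightarrow> (nat \<Rightarrow> ereal) \<Rightarrow> real" where
  "tstat v phi n z y =
     (if v then (\<Sum>i<n. if i \<in> z then phi (\<Sum>j<n. psi i j (y i) (y j)) else 0)
      else (\<Sum>i<n. if i \<in> z then phi (\<Sum>j<n. if j \<notin> z then psi i j (y i) (y j) else 0) else 0))"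

definition cre :: "nat \<Rightarrow> nat \<Rightarrow> nat set set" where
  "cre n n1 = {z. z \<subseteq> {..<n} \<and> card z = n1}"

definition prob_cre :: "nat \<Rightarrow> nat \<Rightarrow> (nat set \<Rightarrow> bool) \<Rightarrow> real" where
  "prob_cre n n1 P = real (card {z \<in> cre n n1. P z}) / real (card (cre n n1))"

definition Gfun :: "bool \<Rightarrow> (nat \<Rightarrow> real) \<Rightarrow> nat \<Rightarrow> nat \<Rightarrow> (nat \<Rightarrow> real) \<Rightarrow> real \<Rightarrow> real" where
  "Gfun v phi n n1 y0 c = prob_cre n n1 (\<lambda>a. tstat v phi n a (\<lambda>i. ereal (y0 i)) \<ge> c)"

definition Mobs :: "(nat \<Rightarrow> bool) \<Rightarrow> (nat \<Rightarrow> bool) \<Rightarrow> nat set \<Rightarrow> nat \<Rightarrow> bool" where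
  "Mobs M1 M0 Z i = (if i \<in> Z then M1 i else M0 i)"

definition Yobs :: "(nat \<Rightarrow> real) \<Rightarrow> (nat \<Rightarrow> real) \<Rightarrow> nat set \<Rightarrow> nat \<Rightarrow> real" where
  "Yobs Y1 Y0 Z i = (if i \<in> Z then Y1 i else Y0 i)"

text \<open>Imputed control potential outcome vector in extended reals.\<close>
definition Ytil :: "mech \<Rightarrow> nat set \<Rightarrow> (nat \<Rightarrow> bool) \<Rightarrow> (nat \<Rightarrow> real) \<Rightarrow> (nat \<Rightarrow> real) \<Rightarrow> nat \<Rightarrow> ereal" where
  "Ytil m Z Mo Yo \<delta> i =
     (if i \<in> Z then (if Mo i then ereal (Yo i - \<delta> i)
                     else (case m of Mg \<Rightarrow> -\<infinity> | Mmp \<Rightarrow> \<infinity> | Mmn \<Rightarrow> -\<infinity>))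
      else (if Mo i then ereal (Yo i)
            else (case m of Mg \<Rightarrow> \<infinity> | Mmp \<Rightarrow> \<infinity> | Mmn \<Rightarrow> -\<infinity>)))"

definition Jset :: "nat \<Rightarrow> nat set \<Rightarrow> (nat \<Rightarrow> bool) \<Rightarrow> nat set" where
  "Jset n Z Mo = {i \<in> {..<n}. i \<in> Z \<and> Mo i}"

definition Cobs :: "nat \<Rightarrow> nat set \<Rightarrow> (nat \<Rightarrow> bool) \<Rightarrow> nat set" where
  "Cobs n Z Mo = {i \<in> {..<n}. i \<notin> Z \<and> Mo i}"

text \<open>Position (1-based) of unit i in the ordering j_1,...,j_{n11} of J.\<close>
definition rankJ :: "nat \<Rightarrow> nat set \<Rightarrow> (nat \<Rightarrow> bool) \<Rightarrow> (nat \<Rightarrow> real) \<Rightarrow> nat \<Rightarrow> nat" where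
  "rankJ n Z Mo Yo i = (\<Sum>j\<in>Jset n Z Mo. psi i j (Yo i) (Yo j))"

definition JL :: "nat \<Rightarrow> nat set \<Rightarrow> (nat \<Rightarrow> bool) \<Rightarrow> (nat \<Rightarrow> real) \<Rightarrow> nat \<Rightarrow> nat set" where
  "JL n Z Mo Yo L = {i \<in> Jset n Z Mo. rankJ n Z Mo Yo i > card (Jset n Z Mo) - L}"

definition xi :: "nat \<Rightarrow> nat \<Rightarrow> real \<Rightarrow> nat set \<Rightarrow> (nat \<Rightarrow> bool) \<Rightarrow> (nat \<Rightarrow> real) \<Rightarrow> nat \<Rightarrow> real \<Rightarrow> nat \<Rightarrow> real" where
  "xi n n1 kap Z Mo Yo k c i =
     (if i \<in> JL n Z Mo Yo (min (n1 - k) (card (Jset n Z Mo)))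
      then Max (Yo ` Jset n Z Mo) - Min (Yo ` Cobs n Z Mo) + kap
      else c)"

definition pval :: "bool \<Rightarrow> (nat \<Rightarrow> real) \<Rightarrow> nat \<Rightarrow> nat \<Rightarrow> (nat \<Rightarrow> real) \<Rightarrow> mech \<Rightarrow> real
     \<Rightarrow> (nat \<Rightarrow> bool) \<Rightarrow> (nat \<Rightarrow> real) \<Rightarrow> nat set \<Rightarrow> nat \<Rightarrow> real \<Rightarrow> real" where
  "pval v phi n n1 y0 m kap Mo Yo Z k c =
     Gfun v phi n n1 y0 (tstat v phi n Z (Ytil m Z Mo Yo (xi n n1 kap Z Mo Yo k c)))"

text \<open>k-th smallest (1-based, with multiplicity) of the treated effects.\<close>
definition tau_sorted :: "(nat \<Rightarrow> real) \<Rightarrow> nat set \<Rightarrow> nat \<Rightarrow> real" where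
  "tau_sorted tau Z k = sort (map tau (sorted_list_of_set Z)) ! (k - 1)"

end

theory Submission
  imports Defs "HOL-Library.Product_Lexorder"
begin


lemma psi_key: "psi i j (a::'a::linorder) b = (if (b, j) \<le> (a, i) then 1 else 0)"
  unfolding psi_def by (auto simp: less_eq_prod_def)

lemma sum_if_card: "finite A \<Longrightarrow> (\<Sum>j\<in>A. if P j then 1 else (0::nat)) = card {j\<in>A. P j}"
  by (simp add: sum.If_cases Int_def)

definition rk :: "nat \<Rightarrow> (nat \<Rightarrow> 'a::linorder) \<Rightarrow> nat \<Rightarrow> nat" where
  "rk n y i = card {j \<in> {..<n}. (y j, j) \<le> (y i, i)}"
definition cn :: "nat \<Rightarrow> nat set \<Rightarrow> (nat \<Rightarrow> 'a::linorder) \<Rightarrow> nat \<Rightarrow> nat" where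
  "cn n z y i = card {j \<in> {..<n} - z. (y j, j) \<le> (y i, i)}"

lemma tstat_eq:
  assumes "z \<subseteq> {..<n}"
  shows "tstat v phi n z y = (\<Sum>i\<in>z. phi (if v then rk n y i else cn n z y i))"
proof -
  have in1: "(\<Sum>j<n. psi i j (y i) (y j)) = rk n y i" for i
    unfolding rk_def psi_key by (simp add: sum_if_card)
  have in2: "(\<Sum>j<n. if j \<notin> z then psi i j (y i) (y j) else 0) = cn n z y i" for i
  proof -
    have "(\<Sum>j<n. if j \<notin> z then psi i j (y i) (y j) else 0)
       = (\<Sum>j<n. if j \<notin> z \<and> (y j, j) \<le> (y i, i) then 1 else 0)"
      by (rule sum.cong) (auto simp: psi_key)
    also have "\<dots> = cn n z y i" unfolding cn_def by (simp add: sum_if_card set_diff_eq conj_commute)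
    finally show ?thesis .
  qed
  have "tstat v phi n z y = (\<Sum>i<n. if i \<in> z then phi (if v then rk n y i else cn n z y i) else 0)"
    unfolding tstat_def by (cases v) (auto intro!: sum.cong simp: in1 in2)
  also have "\<dots> = (\<Sum>i\<in>{i\<in>{..<n}. i \<in> z}. phi (if v then rk n y i else cn n z y i))"
    by (rule sum.inter_filter[symmetric]) simp
  also have "{i\<in>{..<n}. i \<in> z} = z" using assms by auto
  finally show ?thesis .
qed


lemma pos_le_iff:
  fixes key :: "nat \<Rightarrow> 'k::linorder"
  assumes "finite S" "inj_on key S" "i \<in> S" "j \<in> S"
  shows "card {l\<in>S. key l \<le> key j} \<le> card {l\<in>S. key l \<le> key i} \<longleftrightarrow> key j \<le> key i"
proof
  assume "key j \<le> key i"
  then show "card {l\<in>S. key l \<le> key j} \<le> card {l\<in>S. key l \<le> key i}"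
    using assms by (intro card_mono) auto
next
  assume a: "card {l\<in>S. key l \<le> key j} \<le> card {l\<in>S. key l \<le> key i}"
  show "key j \<le> key i"
  proof (rule ccontr)
    assume "\<not> key j \<le> key i"
    then have "{l\<in>S. key l \<le> key i} \<subset> {l\<in>S. key l \<le> key j}" using assms by auto
    then have "card {l\<in>S. key l \<le> key i} < card {l\<in>S. key l \<le> key j}"
      using assms by (intro psubset_card_mono) auto
    then show False using a by simp
  qed
qed

lemma pos_bij:
  fixes key :: "nat \<Rightarrow> 'k::linorder"
  assumes "finite S" "inj_on key S"
  shows "bij_betw (\<lambda>i. card {l\<in>S. key l \<le> key i}) S {1..card S}"
proof -
  let ?p = "\<lambda>i. card {l\<in>S. key l \<le> key i}"
  have inj: "inj_on ?p S"
  proof (rule inj_onI)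
    fix i j assume ij: "i \<in> S" "j \<in> S" and eq: "?p i = ?p j"
    have "key j \<le> key i" using pos_le_iff[OF assms ij] eq by simp
    moreover have "key i \<le> key j" using pos_le_iff[OF assms ij(2) ij(1)] eq by simp
    ultimately have "key i = key j" by (rule antisym[rotated])
    then show "i = j" using inj_onD[OF assms(2) _ ij] by blast
  qed
  have sub: "?p ` S \<subseteq> {1..card S}"
  proof
    fix r assume "r \<in> ?p ` S"
    then obtain i where i: "i \<in> S" "r = ?p i" by blast
    have ne: "{l\<in>S. key l \<le> key i} \<noteq> {}" using i by blast
    have fin: "finite {l\<in>S. key l \<le> key i}" using assms(1) by simp
    have "0 < ?p i" using card_gt_0_iff[THEN iffD2, OF conjI[OF ne fin]] .
    moreover have "?p i \<le> card S" using assms(1) by (intro card_mono) auto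
    ultimately show "r \<in> {1..card S}" using i by simp
  qed
  have "card (?p ` S) = card {1..card S}" using card_image[OF inj] by simp
  then have "?p ` S = {1..card S}" using sub by (intro card_subset_eq) auto
  then show ?thesis using inj by (simp add: bij_betw_def)
qed

lemma pos_card_pred:
  fixes key :: "nat \<Rightarrow> 'k::linorder"
  assumes "finite S" "inj_on key S"
  shows "card {i\<in>S. P (card {l\<in>S. key l \<le> key i})} = card {r\<in>{1..card S}. P r}"
proof -
  let ?p = "\<lambda>i. card {l\<in>S. key l \<le> key i}"
  have b: "bij_betw ?p S {1..card S}" by (rule pos_bij[OF assms])
  have "inj_on ?p {i\<in>S. P (?p i)}" using b by (auto simp: bij_betw_def intro: inj_on_subset)
  then have "card {i\<in>S. P (?p i)} = card (?p ` {i\<in>S. P (?p i)})" by (simp add: card_image)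
  also have "?p ` {i\<in>S. P (?p i)} = {r\<in>?p ` S. P r}" by blast
  also have "?p ` S = {1..card S}" using b by (simp add: bij_betw_def)
  finally show ?thesis .
qed


lemma tele_rep:
  fixes phi :: "nat \<Rightarrow> real"
  assumes "r \<le> N"
  shows "phi r = phi 0 + (\<Sum>s<N. if s < r then phi (Suc s) - phi s else 0)"
proof -
    have "(\<Sum>s<N. if s < r then phi (Suc s) - phi s else 0) = (\<Sum>s\<in>{s\<in>{..<N}. s < r}. phi (Suc s) - phi s)"
      by (rule sum.inter_filter[symmetric]) simp
    also have "{s\<in>{..<N}. s < r} = {..<r}" using assms by auto
    also have "(\<Sum>s<r. phi (Suc s) - phi s) = phi r - phi 0" by (rule sum_lessThan_telescope)
    finally show ?thesis by linarith
qed

lemma expand_sum: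
  fixes phi :: "nat \<Rightarrow> real" and h :: "nat \<Rightarrow> nat"
  assumes "finite Z" "\<forall>i\<in>Z. h i \<le> N"
  shows "(\<Sum>i\<in>Z. phi (h i)) = real (card Z) * phi 0 + (\<Sum>s<N. (phi (Suc s) - phi s) * real (card {i\<in>Z. s < h i}))"
proof -
  have "(\<Sum>i\<in>Z. phi (h i)) = (\<Sum>i\<in>Z. phi 0 + (\<Sum>s<N. if s < h i then phi (Suc s) - phi s else 0))"
    using assms(2) tele_rep by (intro sum.cong) auto
  also have "\<dots> = (\<Sum>i\<in>Z. phi 0) + (\<Sum>i\<in>Z. \<Sum>s<N. if s < h i then phi (Suc s) - phi s else 0)"
    by (rule sum.distrib)
  also have "(\<Sum>i\<in>Z. phi 0) = real (card Z) * phi 0" by simp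
  also have "(\<Sum>i\<in>Z. \<Sum>s<N. if s < h i then phi (Suc s) - phi s else 0) = (\<Sum>s<N. \<Sum>i\<in>Z. if s < h i then phi (Suc s) - phi s else 0)"
    by (rule sum.swap)
  also have "\<dots> = (\<Sum>s<N. (phi (Suc s) - phi s) * real (card {i\<in>Z. s < h i}))"
  proof (rule sum.cong)
    fix s
    have "(\<Sum>i\<in>Z. if s < h i then phi (Suc s) - phi s else 0) = (\<Sum>i\<in>{i\<in>Z. s < h i}. phi (Suc s) - phi s)"
      by (rule sum.inter_filter[symmetric]) (rule assms(1))
    then show "(\<Sum>i\<in>Z. if s < h i then phi (Suc s) - phi s else 0) = (phi (Suc s) - phi s) * real (card {i\<in>Z. s < h i})"
      by (simp only: sum_constant) (simp add: mult.commute)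
  qed simp
  finally show ?thesis .
qed

lemma thresh_sum:
  fixes f g :: "nat \<Rightarrow> nat" and phi :: "nat \<Rightarrow> real"
  assumes "mono phi" "finite Z" "\<forall>i\<in>Z. f i \<le> N" "\<forall>i\<in>Z. g i \<le> N"
    "\<forall>x. card {i\<in>Z. g i \<le> x} \<le> card {i\<in>Z. f i \<le> x}"
  shows "(\<Sum>i\<in>Z. phi (f i)) \<le> (\<Sum>i\<in>Z. phi (g i))"
proof -
  have d0: "phi s \<le> phi (Suc s)" for s using monoD[OF assms(1), of s "Suc s"] by simp
  have c1: "card {i\<in>Z. s < h i} = card Z - card {i\<in>Z. h i \<le> s}" for h :: "nat \<Rightarrow> nat" and s
  proof -
    have "{i\<in>Z. s < h i} = Z - {i\<in>Z. h i \<le> s}" by auto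
    then show ?thesis using assms(2) by (simp add: card_Diff_subset)
  qed
  have cmp: "card {i\<in>Z. s < f i} \<le> card {i\<in>Z. s < g i}" for s
    unfolding c1 using assms(5) diff_le_mono2 by blast
  have "(\<Sum>s<N. (phi (Suc s) - phi s) * real (card {i\<in>Z. s < f i})) \<le> (\<Sum>s<N. (phi (Suc s) - phi s) * real (card {i\<in>Z. s < g i}))"
    by (intro sum_mono mult_left_mono) (use cmp d0 in auto)
  then show ?thesis unfolding expand_sum[OF assms(2,3)] expand_sum[OF assms(2,4)] by (rule add_left_mono)
qed
lemma rk_split:
  assumes "Z \<subseteq> {..<n}"
  shows "rk n y i = card {l\<in>Z. (y l, l) \<le> (y i, i)} + cn n Z y i"
proof -
  have "{j\<in>{..<n}. (y j, j) \<le> (y i, i)} = {l\<in>Z. (y l, l) \<le> (y i, i)} \<union> {j\<in>{..<n} - Z. (y j, j) \<le> (y i, i)}"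
    using assms by auto
  then show ?thesis unfolding rk_def cn_def
    using assms by (simp add: card_Un_disjoint finite_subset disjoint_iff)
qed

lemma cn_mono: assumes "(y l, l) \<le> (y i, i)" shows "cn n Z y l \<le> cn n Z y i"
  unfolding cn_def by (rule card_mono) (simp, blast intro: order.trans[OF _ assms])

lemma rk_mono: assumes "(y l, l) \<le> (y i, i)" shows "rk n y l \<le> rk n y i"
  unfolding rk_def by (rule card_mono) (simp, blast intro: order.trans[OF _ assms])

lemma rk_le: "rk n y i \<le> n"
  unfolding rk_def using card_mono[of "{..<n}" "{j\<in>{..<n}. (y j, j) \<le> (y i, i)}"] by auto

lemma cn_le: "cn n Z y i \<le> n"
  unfolding cn_def using card_mono[of "{..<n}" "{j\<in>{..<n} - Z. (y j, j) \<le> (y i, i)}"] by auto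

lemma inj_key: "inj_on (\<lambda>i. (y i, i)) S"
  by (auto simp: inj_on_def)

lemma rank_thresh:
  fixes y y' :: "nat \<Rightarrow> 'a::linorder"
  assumes Z: "Z \<subseteq> {..<n}"
    and H: "\<forall>x. card {i\<in>Z. cn n Z y i \<le> x} \<le> card {i\<in>Z. cn n Z y' i \<le> x}"
  shows "card {i\<in>Z. rk n y i \<le> m} \<le> card {i\<in>Z. rk n y' i \<le> m}"
proof (cases "{i\<in>Z. rk n y i \<le> m} = {}")
  case True then show ?thesis by (metis card.empty zero_le)
next
  case False
  define D where "D = {i\<in>Z. rk n y i \<le> m}"
  define a where "a = card D"
  have finZ: "finite Z" using Z finite_subset by blast
  have finD: "finite D" unfolding D_def using finZ by simp
  have neD: "D \<noteq> {}" using False D_def by simp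
  let ?K = "(\<lambda>i. (y i, i)) ` D"
  have "Max ?K \<in> ?K" using finD neD by (intro Max_in) auto
  then obtain t where t1: "t \<in> D" and tmax: "(y t, t) = Max ?K" by auto
  have t2: "\<forall>l\<in>D. (y l, l) \<le> (y t, t)" unfolding tmax using finD by (intro ballI Max_ge) auto
  have Deq: "{l\<in>Z. (y l, l) \<le> (y t, t)} = D"
  proof
    show "{l\<in>Z. (y l, l) \<le> (y t, t)} \<subseteq> D"
    proof
      fix l assume "l \<in> {l\<in>Z. (y l, l) \<le> (y t, t)}"
      then have "l \<in> Z" "rk n y l \<le> rk n y t" using rk_mono by auto
      then show "l \<in> D" using t1 unfolding D_def by auto
    qed
    show "D \<subseteq> {l\<in>Z. (y l, l) \<le> (y t, t)}" using t2 D_def by auto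
  qed
  have "rk n y t = a + cn n Z y t" using rk_split[OF Z, of y t] Deq a_def by simp
  moreover have "rk n y t \<le> m" using t1 D_def by simp
  ultimately have am: "a \<le> m" "cn n Z y t \<le> m - a" by auto
  have "D \<subseteq> {i\<in>Z. cn n Z y i \<le> m - a}"
  proof
    fix i assume i: "i \<in> D"
    then have "cn n Z y i \<le> cn n Z y t" using t2 cn_mono[of y i t n Z] by blast
    then show "i \<in> {i\<in>Z. cn n Z y i \<le> m - a}" using i am D_def by simp
  qed
  then have "a \<le> card {i\<in>Z. cn n Z y i \<le> m - a}" unfolding a_def using finZ by (intro card_mono) auto
  also have "\<dots> \<le> card {i\<in>Z. cn n Z y' i \<le> m - a}" using H by blast
  finally have aE: "a \<le> card {i\<in>Z. cn n Z y' i \<le> m - a}" .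
  define E where "E = {i\<in>Z. cn n Z y' i \<le> m - a}"
  have finE: "finite E" unfolding E_def using finZ by simp
  define p where "p i = card {l\<in>E. (y' l, l) \<le> (y' i, i)}" for i
  have "card {i\<in>E. p i \<le> a} = card {r\<in>{1..card E}. r \<le> a}"
    unfolding p_def by (rule pos_card_pred[OF finE inj_key])
  also have "{r\<in>{1..card E}. r \<le> a} = {1..a}" using aE E_def by auto
  finally have cP: "card {i\<in>E. p i \<le> a} = a" by simp
  have "{i\<in>E. p i \<le> a} \<subseteq> {i\<in>Z. rk n y' i \<le> m}"
  proof
    fix i assume i: "i \<in> {i\<in>E. p i \<le> a}"
    have "{l\<in>Z. (y' l, l) \<le> (y' i, i)} = {l\<in>E. (y' l, l) \<le> (y' i, i)}"
    proof
      show "{l\<in>E. (y' l, l) \<le> (y' i, i)} \<subseteq> {l\<in>Z. (y' l, l) \<le> (y' i, i)}" unfolding E_def by blast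
      show "{l\<in>Z. (y' l, l) \<le> (y' i, i)} \<subseteq> {l\<in>E. (y' l, l) \<le> (y' i, i)}"
      proof
        fix l assume l: "l \<in> {l\<in>Z. (y' l, l) \<le> (y' i, i)}"
        then have "cn n Z y' l \<le> cn n Z y' i" using cn_mono[of y' l i n Z] by blast
        then show "l \<in> {l\<in>E. (y' l, l) \<le> (y' i, i)}" using l i unfolding E_def by simp
      qed
    qed
    then have "rk n y' i = p i + cn n Z y' i" using rk_split[OF Z, of y' i] p_def by simp
    then show "i \<in> {i\<in>Z. rk n y' i \<le> m}" using i am E_def by auto
  qed
  then have "card {i\<in>E. p i \<le> a} \<le> card {i\<in>Z. rk n y' i \<le> m}" using finZ by (intro card_mono) auto
  then show ?thesis using cP D_def a_def by simp
qed

lemma mono_stat: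
  fixes y y' :: "nat \<Rightarrow> ereal"
  assumes Z: "Z \<subseteq> {..<n}" and ph: "mono phi"
    and H: "\<forall>x. card {i\<in>Z. cn n Z y i \<le> x} \<le> card {i\<in>Z. cn n Z y' i \<le> x}"
  shows "tstat v phi n Z y' \<le> tstat v phi n Z y"
proof -
  have finZ: "finite Z" using Z finite_subset by blast
  show ?thesis
  proof (cases v)
    case True
    have "(\<Sum>i\<in>Z. phi (rk n y' i)) \<le> (\<Sum>i\<in>Z. phi (rk n y i))"
      using rank_thresh[OF Z H] by (intro thresh_sum[OF ph finZ, where N = n]) (auto simp: rk_le)
    then show ?thesis using True by (simp add: tstat_eq[OF Z])
  next
    case False
    have "(\<Sum>i\<in>Z. phi (cn n Z y' i)) \<le> (\<Sum>i\<in>Z. phi (cn n Z y i))"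
      using H by (intro thresh_sum[OF ph finZ, where N = n]) (auto simp: cn_le)
    then show ?thesis using False by (simp add: tstat_eq[OF Z])
  qed
qed



declare less_eq_prod_simp[simp del] less_prod_simp[simp del]

lemma rk_bij: "bij_betw (rk n y) {..<n} {1..n}"
proof -
  have "bij_betw (\<lambda>i. card {l\<in>{..<n}. (y l, l) \<le> (y i, i)}) {..<n} {1..card {..<n::nat}}"
    by (rule pos_bij[OF finite_lessThan inj_key])
  then show ?thesis unfolding rk_def by simp
qed

lemma rk_le_iff: "i < n \<Longrightarrow> j < n \<Longrightarrow> rk n y j \<le> rk n y i \<longleftrightarrow> (y j, j) \<le> (y i, i)"
  unfolding rk_def using pos_le_iff[OF finite_lessThan inj_key, of i n j y] by simp

lemma perm_exists:
  fixes w u :: "nat \<Rightarrow> 'a::linorder"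
  shows "\<exists>\<sigma>. bij_betw \<sigma> {..<n} {..<n} \<and>
     (\<forall>i<n. \<forall>j<n. ((u (\<sigma> j), \<sigma> j) \<le> (u (\<sigma> i), \<sigma> i)) = ((w j, j) \<le> (w i, i)))"
proof -
  define \<sigma> where "\<sigma> = inv_into {..<n} (rk n u) \<circ> rk n w"
  have bu: "bij_betw (rk n u) {..<n} {1..n}" by (rule rk_bij)
  have bw: "bij_betw (rk n w) {..<n} {1..n}" by (rule rk_bij)
  have b: "bij_betw \<sigma> {..<n} {..<n}" unfolding \<sigma>_def
    by (rule bij_betw_trans[OF bw bij_betw_inv_into[OF bu]])
  have rs: "rk n u (\<sigma> i) = rk n w i" if "i < n" for i
  proof -
    have "rk n w i \<in> rk n u ` {..<n}" using bu bw that by (auto simp: bij_betw_def)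
    then show ?thesis unfolding \<sigma>_def by (simp add: f_inv_into_f)
  qed
  have "\<forall>i<n. \<forall>j<n. ((u (\<sigma> j), \<sigma> j) \<le> (u (\<sigma> i), \<sigma> i)) = ((w j, j) \<le> (w i, i))"
  proof (intro allI impI)
    fix i j assume ij: "i < n" "j < n"
    have si: "\<sigma> i < n" "\<sigma> j < n" using b ij by (auto simp: bij_betw_def)
    have "((u (\<sigma> j), \<sigma> j) \<le> (u (\<sigma> i), \<sigma> i)) = (rk n u (\<sigma> j) \<le> rk n u (\<sigma> i))"
      using rk_le_iff[OF si(1) si(2), of u] by simp
    also have "\<dots> = (rk n w j \<le> rk n w i)" using rs ij by simp
    also have "\<dots> = ((w j, j) \<le> (w i, i))" using rk_le_iff[OF ij(1) ij(2), of w] by simp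
    finally show "((u (\<sigma> j), \<sigma> j) \<le> (u (\<sigma> i), \<sigma> i)) = ((w j, j) \<le> (w i, i))" .
  qed
  then show ?thesis using b by blast
qed

lemma tstat_perm:
  fixes w u :: "nat \<Rightarrow> ereal"
  assumes b: "bij_betw \<sigma> {..<n} {..<n}"
    and k: "\<forall>i<n. \<forall>j<n. ((u (\<sigma> j), \<sigma> j) \<le> (u (\<sigma> i), \<sigma> i)) = ((w j, j) \<le> (w i, i))"
    and A: "A \<subseteq> {..<n}"
  shows "tstat v phi n (\<sigma> ` A) u = tstat v phi n A w"
proof -
  have inj: "inj_on \<sigma> {..<n}" using b by (simp add: bij_betw_def)
  have img: "\<sigma> ` {..<n} = {..<n}" using b by (simp add: bij_betw_def)
  have sA: "\<sigma> ` A \<subseteq> {..<n}" using A img by blast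
  have rkeq: "rk n u (\<sigma> i) = rk n w i" if i: "i < n" for i
  proof -
    have "{j\<in>{..<n}. (u j, j) \<le> (u (\<sigma> i), \<sigma> i)} = \<sigma> ` {j\<in>{..<n}. (w j, j) \<le> (w i, i)}"
    proof
      show "\<sigma> ` {j\<in>{..<n}. (w j, j) \<le> (w i, i)} \<subseteq> {j\<in>{..<n}. (u j, j) \<le> (u (\<sigma> i), \<sigma> i)}"
      proof
        fix x assume "x \<in> \<sigma> ` {j\<in>{..<n}. (w j, j) \<le> (w i, i)}"
        then obtain j where j: "j < n" "(w j, j) \<le> (w i, i)" "x = \<sigma> j" by blast
        have "\<sigma> j < n" using j img by blast
        moreover have "(u (\<sigma> j), \<sigma> j) \<le> (u (\<sigma> i), \<sigma> i)" using k i j by blast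
        ultimately show "x \<in> {j\<in>{..<n}. (u j, j) \<le> (u (\<sigma> i), \<sigma> i)}" using j by simp
      qed
      show "{j\<in>{..<n}. (u j, j) \<le> (u (\<sigma> i), \<sigma> i)} \<subseteq> \<sigma> ` {j\<in>{..<n}. (w j, j) \<le> (w i, i)}"
      proof
        fix j assume j: "j \<in> {j\<in>{..<n}. (u j, j) \<le> (u (\<sigma> i), \<sigma> i)}"
        have "j \<in> \<sigma> ` {..<n}" using j img by simp
        then obtain j' where j': "j' < n" "j = \<sigma> j'" by blast
        have "(u (\<sigma> j'), \<sigma> j') \<le> (u (\<sigma> i), \<sigma> i)" using j j' by simp
        then have "(w j', j') \<le> (w i, i)" using k i j'(1) by blast
        then show "j \<in> \<sigma> ` {j\<in>{..<n}. (w j, j) \<le> (w i, i)}" using j' by blast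
      qed
    qed
    moreover have "card (\<sigma> ` {j\<in>{..<n}. (w j, j) \<le> (w i, i)}) = card {j\<in>{..<n}. (w j, j) \<le> (w i, i)}"
      by (rule card_image, rule inj_on_subset[OF inj]) blast
    ultimately show ?thesis unfolding rk_def by simp
  qed
  have cneq: "cn n (\<sigma> ` A) u (\<sigma> i) = cn n A w i" if i: "i < n" for i
  proof -
    have "{j\<in>{..<n} - \<sigma> ` A. (u j, j) \<le> (u (\<sigma> i), \<sigma> i)} = \<sigma> ` {j\<in>{..<n} - A. (w j, j) \<le> (w i, i)}"
    proof
      show "\<sigma> ` {j\<in>{..<n} - A. (w j, j) \<le> (w i, i)} \<subseteq> {j\<in>{..<n} - \<sigma> ` A. (u j, j) \<le> (u (\<sigma> i), \<sigma> i)}"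
      proof
        fix x assume "x \<in> \<sigma> ` {j\<in>{..<n} - A. (w j, j) \<le> (w i, i)}"
        then obtain j where j: "j < n" "j \<notin> A" "(w j, j) \<le> (w i, i)" "x = \<sigma> j" by auto
        have "\<sigma> j \<notin> \<sigma> ` A" using inj A j by (metis inj_on_image_mem_iff lessThan_iff)
        moreover have "\<sigma> j < n" using j img by blast
        moreover have "(u (\<sigma> j), \<sigma> j) \<le> (u (\<sigma> i), \<sigma> i)" using k i j by blast
        ultimately show "x \<in> {j\<in>{..<n} - \<sigma> ` A. (u j, j) \<le> (u (\<sigma> i), \<sigma> i)}" using j by simp
      qed
      show "{j\<in>{..<n} - \<sigma> ` A. (u j, j) \<le> (u (\<sigma> i), \<sigma> i)} \<subseteq> \<sigma> ` {j\<in>{..<n} - A. (w j, j) \<le> (w i, i)}"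
      proof
        fix j assume j: "j \<in> {j\<in>{..<n} - \<sigma> ` A. (u j, j) \<le> (u (\<sigma> i), \<sigma> i)}"
        have "j \<in> \<sigma> ` {..<n}" using j img by simp
        then obtain j' where j': "j' < n" "j = \<sigma> j'" by blast
        have "(u (\<sigma> j'), \<sigma> j') \<le> (u (\<sigma> i), \<sigma> i)" using j j' by simp
        then have "(w j', j') \<le> (w i, i)" using k i j'(1) by blast
        moreover have "j' \<notin> A" using j j' by blast
        ultimately show "j \<in> \<sigma> ` {j\<in>{..<n} - A. (w j, j) \<le> (w i, i)}" using j' by blast
      qed
    qed
    moreover have "card (\<sigma> ` {j\<in>{..<n} - A. (w j, j) \<le> (w i, i)}) = card {j\<in>{..<n} - A. (w j, j) \<le> (w i, i)}"
      by (rule card_image, rule inj_on_subset[OF inj]) blast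
    ultimately show ?thesis unfolding cn_def by simp
  qed
  have "tstat v phi n (\<sigma> ` A) u = (\<Sum>i\<in>\<sigma> ` A. phi (if v then rk n u i else cn n (\<sigma> ` A) u i))"
    by (rule tstat_eq[OF sA])
  also have "\<dots> = (\<Sum>i\<in>A. phi (if v then rk n u (\<sigma> i) else cn n (\<sigma> ` A) u (\<sigma> i)))"
    using inj_on_subset[OF inj A] by (simp add: sum.reindex)
  also have "\<dots> = (\<Sum>i\<in>A. phi (if v then rk n w i else cn n A w i))"
    using A rkeq cneq by (intro sum.cong) auto
  also have "\<dots> = tstat v phi n A w" by (rule tstat_eq[OF A, symmetric])
  finally show ?thesis .
qed

lemma finite_cre: "finite (cre n n1)"
  unfolding cre_def by (rule finite_subset[of _ "Pow {..<n}"]) auto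

lemma card_cre_pos: "n1 \<le> n \<Longrightarrow> 0 < card (cre n n1)"
proof -
  assume "n1 \<le> n"
  then have "{..<n1} \<in> cre n n1" unfolding cre_def by auto
  then show ?thesis using finite_cre card_gt_0_iff by blast
qed

lemma G_eq:
  fixes w :: "nat \<Rightarrow> ereal"
  shows "Gfun v phi n n1 y0 c = prob_cre n n1 (\<lambda>a. c \<le> tstat v phi n a w)"
proof -
  let ?u = "\<lambda>i. ereal (y0 i)"
  obtain \<sigma> where b: "bij_betw \<sigma> {..<n} {..<n}"
    and k: "\<forall>i<n. \<forall>j<n. ((?u (\<sigma> j), \<sigma> j) \<le> (?u (\<sigma> i), \<sigma> i)) = ((w j, j) \<le> (w i, i))"
    using perm_exists[of n ?u w] by blast
  have inj: "inj_on \<sigma> {..<n}" using b by (simp add: bij_betw_def)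
  have img: "\<sigma> ` {..<n} = {..<n}" using b by (simp add: bij_betw_def)
  let ?F = "{A\<in>cre n n1. c \<le> tstat v phi n A w}"
  let ?G = "{B\<in>cre n n1. c \<le> tstat v phi n B ?u}"
  have injI: "inj_on (image \<sigma>) ?F"
  proof (rule inj_onI)
    fix A B assume "A \<in> ?F" "B \<in> ?F" "\<sigma> ` A = \<sigma> ` B"
    then show "A = B" using inj_on_image_eq_iff[OF inj] unfolding cre_def by auto
  qed
  have "image \<sigma> ` ?F = ?G"
  proof
    show "image \<sigma> ` ?F \<subseteq> ?G"
    proof
      fix X assume "X \<in> image \<sigma> ` ?F"
      then obtain A where A: "A \<in> ?F" "X = \<sigma> ` A" by blast
      have As: "A \<subseteq> {..<n}" "card A = n1" using A unfolding cre_def by auto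
      have "X \<subseteq> {..<n}" using A As img by blast
      moreover have "card X = n1" using A As card_image inj_on_subset[OF inj As(1)] by metis
      moreover have "c \<le> tstat v phi n X ?u" using A tstat_perm[OF b k As(1)] by simp
      ultimately show "X \<in> ?G" unfolding cre_def by simp
    qed
    show "?G \<subseteq> image \<sigma> ` ?F"
    proof
      fix B assume B: "B \<in> ?G"
      have Bs: "B \<subseteq> {..<n}" "card B = n1" using B unfolding cre_def by auto
      define A where "A = inv_into {..<n} \<sigma> ` B"
      have As: "A \<subseteq> {..<n}" unfolding A_def
      proof (rule image_subsetI)
        fix x assume "x \<in> B"
        then have "x \<in> \<sigma> ` {..<n}" using Bs img by blast
        then show "inv_into {..<n} \<sigma> x \<in> {..<n}" by (rule inv_into_into)
      qed
      have sA: "\<sigma> ` A = B" unfolding A_def using Bs img by (simp add: image_inv_into_cancel)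
      have "card A = n1" using sA Bs card_image inj_on_subset[OF inj As] by metis
      moreover have "c \<le> tstat v phi n A w" using B sA tstat_perm[OF b k As] by simp
      ultimately have "A \<in> ?F" using As unfolding cre_def by simp
      then show "B \<in> image \<sigma> ` ?F" using sA by blast
    qed
  qed
  then have "card ?F = card ?G" using card_image[OF injI] by simp
  then show ?thesis unfolding Gfun_def prob_cre_def by simp
qed

lemma valid:
  fixes X :: "nat set \<Rightarrow> real"
  assumes "n1 \<le> n" "0 \<le> alpha"
  shows "prob_cre n n1 (\<lambda>Z. prob_cre n n1 (\<lambda>a. X Z \<le> X a) \<le> alpha) \<le> alpha"
proof -
  let ?N = "real (card (cre n n1))"
  have Npos: "0 < ?N" using card_cre_pos[OF assms(1)] by simp
  define E where "E = {Z\<in>cre n n1. prob_cre n n1 (\<lambda>a. X Z \<le> X a) \<le> alpha}"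
  have finE: "finite E" unfolding E_def using finite_cre by simp
  show ?thesis
  proof (cases "E = {}")
    case True
    have "prob_cre n n1 (\<lambda>Z. prob_cre n n1 (\<lambda>a. X Z \<le> X a) \<le> alpha) = real (card E) / ?N"
      unfolding prob_cre_def E_def by simp
    then show ?thesis using True assms(2) by simp
  next
    case False
    have "Min (X ` E) \<in> X ` E" using finE False by (intro Min_in) auto
    then obtain Z0 where Z0: "Z0 \<in> E" "X Z0 = Min (X ` E)" by auto
    have mon: "prob_cre n n1 (\<lambda>a. t \<le> X a) \<le> prob_cre n n1 (\<lambda>a. s \<le> X a)" if "s \<le> t" for s t
    proof -
      have "card {a\<in>cre n n1. t \<le> X a} \<le> card {a\<in>cre n n1. s \<le> X a}"
        using that finite_cre by (intro card_mono) auto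
      then show ?thesis unfolding prob_cre_def using Npos by (simp add: divide_right_mono)
    qed
    have Eeq: "E = {a\<in>cre n n1. X Z0 \<le> X a}"
    proof
      show "E \<subseteq> {a\<in>cre n n1. X Z0 \<le> X a}"
      proof
        fix a assume a: "a \<in> E"
        then have "X Z0 \<le> X a" unfolding Z0(2) using finE by (intro Min_le) auto
        then show "a \<in> {a\<in>cre n n1. X Z0 \<le> X a}" using a E_def by simp
      qed
      show "{a\<in>cre n n1. X Z0 \<le> X a} \<subseteq> E"
      proof
        fix a assume a: "a \<in> {a\<in>cre n n1. X Z0 \<le> X a}"
        then have "prob_cre n n1 (\<lambda>b. X a \<le> X b) \<le> prob_cre n n1 (\<lambda>b. X Z0 \<le> X b)" using mon by simp
        also have "\<dots> \<le> alpha" using Z0(1) E_def by simp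
        finally show "a \<in> E" using a E_def by simp
      qed
    qed
    have "prob_cre n n1 (\<lambda>Z. prob_cre n n1 (\<lambda>a. X Z \<le> X a) \<le> alpha) = real (card E) / ?N"
      unfolding E_def by (simp add: prob_cre_def[of n n1 "\<lambda>Z. prob_cre n n1 (\<lambda>a. X Z \<le> X a) \<le> alpha"])
    also have "\<dots> = prob_cre n n1 (\<lambda>a. X Z0 \<le> X a)" by (simp add: Eeq prob_cre_def)
    also have "\<dots> \<le> alpha" using Z0(1) E_def by simp
    finally show ?thesis .
  qed
qed

lemma upclosed_interval:
  fixes S :: "real set"
  assumes up: "\<And>c c'. c \<in> S \<Longrightarrow> c \<le> c' \<Longrightarrow> c' \<in> S"
  shows "S = {c. Inf (ereal ` S) \<le> ereal c} \<or> S = {c. Inf (ereal ` S) < ereal c}"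
proof -
  let ?m = "Inf (ereal ` S)"
  have a: "?m \<le> ereal c" if "c \<in> S" for c using that by (simp add: INF_lower)
  have b: "c \<in> S" if "?m < ereal c" for c
  proof -
    have "\<exists>x\<in>ereal ` S. x < ereal c" by (metis Inf_less_iff that)
    then obtain x where "x \<in> ereal ` S" "x < ereal c" by blast
    then obtain s where "s \<in> S" "s < c" by auto
    then show ?thesis using up by auto
  qed
  show ?thesis
  proof (cases "\<exists>c0\<in>S. ?m = ereal c0")
    case True
    then obtain c0 where c0: "c0 \<in> S" "?m = ereal c0" by blast
    have "S = {c. ?m \<le> ereal c}"
    proof
      show "S \<subseteq> {c. ?m \<le> ereal c}" using a by blast
      show "{c. ?m \<le> ereal c} \<subseteq> S" using c0 up by auto
    qed
    then show ?thesis by blast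
  next
    case False
    have "S = {c. ?m < ereal c}"
    proof
      show "S \<subseteq> {c. ?m < ereal c}" using a False by (auto simp: le_less)
      show "{c. ?m < ereal c} \<subseteq> S" using b by blast
    qed
    then show ?thesis by blast
  qed
qed



lemma tau_count:
  assumes "finite Z" "card Z = n1" "k \<in> {1..n1}"
  shows "card {i\<in>Z. tau_sorted tau Z k < tau i} \<le> n1 - k"
proof -
  let ?l = "sorted_list_of_set Z"
  define ys where "ys = sort (map tau ?l)"
  have len: "length ys = n1" using assms by (simp add: ys_def)
  have srt: "sorted ys" unfolding ys_def by simp
  have c: "tau_sorted tau Z k = ys ! (k-1)" by (simp add: tau_sorted_def ys_def)
  define c0 where "c0 = ys ! (k-1)"
  have "card {i\<in>Z. c0 < tau i} = card ({i. c0 < tau i} \<inter> set ?l)"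
    using assms(1) by (intro arg_cong[where f = card]) auto
  also have "\<dots> = length (filter (\<lambda>i. c0 < tau i) ?l)"
    by (rule distinct_length_filter[OF distinct_sorted_list_of_set, symmetric])
  also have "\<dots> = length (filter (\<lambda>x. c0 < x) (map tau ?l))" by (simp add: filter_map comp_def)
  also have "\<dots> = length (filter (\<lambda>x. c0 < x) ys)" unfolding ys_def by (simp add: filter_sort)
  also have "\<dots> = card {t. t < n1 \<and> c0 < ys ! t}" by (simp add: length_filter_conv_card len)
  also have "\<dots> \<le> card {k..<n1}"
  proof (rule card_mono)
    show "{t. t < n1 \<and> c0 < ys ! t} \<subseteq> {k..<n1}"
    proof
      fix t assume t: "t \<in> {t. t < n1 \<and> c0 < ys ! t}"
      have "k \<le> t"
      proof (rule ccontr)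
        assume "\<not> k \<le> t"
        then have "t \<le> k - 1" by simp
        then have "ys ! t \<le> ys ! (k-1)" by (rule sorted_nth_mono[OF srt]) (use assms(3) len in auto)
        then show False using t c0_def by simp
      qed
      then show "t \<in> {k..<n1}" using t by simp
    qed
  qed simp
  finally show ?thesis using c c0_def by simp
qed

lemma thresh_comb:
  fixes f g :: "nat \<Rightarrow> nat"
  assumes fin: "finite Z" and AZ: "A \<subseteq> Z" and BZ: "B \<subseteq> Z" and cAB: "card B \<le> card A"
    and R: "\<forall>i\<in>Z - (A \<union> B). f i \<le> g i"
    and P: "\<forall>i\<in>A. \<forall>l\<in>A \<union> B. f i \<le> g l"
    and Q: "\<forall>i\<in>B - A. \<forall>l\<in>A - B. f i \<le> g l"
  shows "card {i\<in>Z. g i \<le> x} \<le> card {i\<in>Z. f i \<le> x}"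
proof -
  define EW where "EW = {i\<in>Z. g i \<le> x}"
  define EY where "EY = {i\<in>Z. f i \<le> x}"
  define U where "U = A \<union> B"
  have finU: "finite U" using fin AZ BZ U_def finite_subset by blast
  have split: "card {i\<in>Z. h i \<le> x} = card ({i\<in>Z. h i \<le> x} \<inter> (Z - U)) + card ({i\<in>Z. h i \<le> x} \<inter> U)"
    for h :: "nat \<Rightarrow> nat"
  proof -
    define S where "S = {i\<in>Z. h i \<le> x}"
    have fS: "finite S" unfolding S_def using fin by simp
    have "card (S \<inter> (Z - U) \<union> S \<inter> U) = card (S \<inter> (Z - U)) + card (S \<inter> U)"
      by (rule card_Un_disjoint) (use fS in auto)
    moreover have "S \<inter> (Z - U) \<union> S \<inter> U = S" unfolding S_def by blast
    ultimately show ?thesis unfolding S_def by simp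
  qed
  have r: "card (EW \<inter> (Z - U)) \<le> card (EY \<inter> (Z - U))"
  proof (rule card_mono)
    show "finite (EY \<inter> (Z - U))" using fin by simp
    show "EW \<inter> (Z - U) \<subseteq> EY \<inter> (Z - U)"
    proof
      fix i assume i: "i \<in> EW \<inter> (Z - U)"
      then have "f i \<le> g i" using R U_def by blast
      moreover have "g i \<le> x" using i EW_def by simp
      ultimately show "i \<in> EY \<inter> (Z - U)" using i EY_def by simp
    qed
  qed
  have u: "card (EW \<inter> U) \<le> card (EY \<inter> U)"
  proof (cases "EW \<inter> U = {}")
    case True then show ?thesis by simp
  next
    case False
    then obtain l0 where l0: "l0 \<in> U" "g l0 \<le> x" unfolding EW_def by blast
    have AEY: "A \<subseteq> EY \<inter> U"
    proof
      fix i assume i: "i \<in> A"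
      then have "f i \<le> g l0" using P l0 U_def by blast
      then have "f i \<le> x" using l0 by simp
      then show "i \<in> EY \<inter> U" using i AZ U_def EY_def by auto
    qed
    show ?thesis
    proof (cases "B - A \<subseteq> EY")
      case True
      then have "U \<subseteq> EY \<inter> U" using AEY U_def by blast
      then show ?thesis using finU by (intro card_mono) auto
    next
      case False
      then obtain i0 where i0: "i0 \<in> B - A" "\<not> f i0 \<le> x" using BZ unfolding EY_def by blast
      have "EW \<inter> U \<subseteq> B"
      proof
        fix l assume l: "l \<in> EW \<inter> U"
        show "l \<in> B"
        proof (rule ccontr)
          assume "l \<notin> B"
          then have "l \<in> A - B" using l U_def by blast
          then have "f i0 \<le> g l" using Q i0 by blast
          then show False using l i0 EW_def by simp
        qed
      qed
      then have "card (EW \<inter> U) \<le> card B" using fin BZ finite_subset by (intro card_mono) auto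
      also have "\<dots> \<le> card A" by (rule cAB)
      also have "\<dots> \<le> card (EY \<inter> U)" using AEY finU by (intro card_mono) auto
      finally show ?thesis .
    qed
  qed
  show ?thesis using split[of g] split[of f] r u unfolding EW_def EY_def by simp
qed

lemma cn_cmp:
  assumes "\<forall>j\<in>{..<n} - Z. y' j = y j" "(y' i, i) \<le> (y l, l)"
  shows "cn n Z y' i \<le> cn n Z y l"
  unfolding cn_def
proof (rule card_mono)
  show "{j \<in> {..<n} - Z. (y' j, j) \<le> (y' i, i)} \<subseteq> {j \<in> {..<n} - Z. (y j, j) \<le> (y l, l)}"
  proof
    fix j assume j: "j \<in> {j \<in> {..<n} - Z. (y' j, j) \<le> (y' i, i)}"
    then have "(y j, j) \<le> (y' i, i)" using assms(1) by auto
    then have "(y j, j) \<le> (y l, l)" using assms(2) by (rule order.trans)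
    then show "j \<in> {j \<in> {..<n} - Z. (y j, j) \<le> (y l, l)}" using j by simp
  qed
qed simp

lemma pair_le_same: "(a::ereal) \<le> b \<Longrightarrow> (a, i::nat) \<le> (b, i)"
  by (simp add: less_eq_prod_simp)

lemma pair_shift: "((a::real), i::nat) < (b, j) \<Longrightarrow> (ereal (a - c), i) \<le> (ereal (b - c), j)"
  by (auto simp: less_prod_simp less_eq_prod_simp less_imp_le)



lemma finite_Jset: "finite (Jset n Z Mo)"
  unfolding Jset_def by simp

lemma rankJ_eq: "rankJ n Z Mo Yo i = card {j\<in>Jset n Z Mo. (Yo j, j) \<le> (Yo i, i)}"
  unfolding rankJ_def psi_key by (rule sum_if_card[OF finite_Jset])

lemma JL_sub: "JL n Z Mo Yo L \<subseteq> Jset n Z Mo"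
  unfolding JL_def by blast

lemma JL_card:
  assumes "L \<le> card (Jset n Z Mo)"
  shows "card (JL n Z Mo Yo L) = L"
proof -
  let ?J = "Jset n Z Mo"
  have "card (JL n Z Mo Yo L) = card {i\<in>?J. card ?J - L < card {j\<in>?J. (Yo j, j) \<le> (Yo i, i)}}"
    unfolding JL_def rankJ_eq by simp
  also have "\<dots> = card {r\<in>{1..card ?J}. card ?J - L < r}"
    by (rule pos_card_pred[OF finite_Jset inj_key])
  also have "{r\<in>{1..card ?J}. card ?J - L < r} = {card ?J - L + 1..card ?J}" using assms by auto
  also have "card \<dots> = L" using assms by simp
  finally show ?thesis .
qed

lemma JL_top:
  assumes "i \<in> Jset n Z Mo - JL n Z Mo Yo L" "l \<in> JL n Z Mo Yo L"
  shows "(Yo i, i) < (Yo l, l)"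
proof (rule ccontr)
  let ?J = "Jset n Z Mo"
  assume "\<not> (Yo i, i) < (Yo l, l)"
  then have "(Yo l, l) \<le> (Yo i, i)" by simp
  then have "card {j\<in>?J. (Yo j, j) \<le> (Yo l, l)} \<le> card {j\<in>?J. (Yo j, j) \<le> (Yo i, i)}"
    using pos_le_iff[OF finite_Jset inj_key, of i n Z Mo l Yo] assms JL_sub by blast
  then have "rankJ n Z Mo Yo l \<le> rankJ n Z Mo Yo i" unfolding rankJ_eq .
  then show False using assms unfolding JL_def by auto
qed

definition Wv :: "mech \<Rightarrow> (nat \<Rightarrow> bool) \<Rightarrow> (nat \<Rightarrow> real) \<Rightarrow> nat \<Rightarrow> ereal" where
  "Wv m M0 Y0 i = (if M0 i then ereal (Y0 i) else (case m of Mmn \<Rightarrow> -\<infinity> | _ \<Rightarrow> \<infinity>))"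

lemma Ytil_ctrl:
  "j \<notin> Z \<Longrightarrow> Ytil m Z (Mobs M1 M0 Z) (Yobs Y1 Y0 Z) \<delta> j = Wv m M0 Y0 j"
  unfolding Ytil_def Wv_def Mobs_def Yobs_def by (cases m) auto

lemma Ytil_trt:
  "i \<in> Z \<Longrightarrow> Ytil m Z (Mobs M1 M0 Z) (Yobs Y1 Y0 Z) \<delta> i =
     (if M1 i then ereal (Y1 i - \<delta> i) else (case m of Mg \<Rightarrow> -\<infinity> | Mmp \<Rightarrow> \<infinity> | Mmn \<Rightarrow> -\<infinity>))"
  unfolding Ytil_def Mobs_def Yobs_def by simp

lemma mono_c:
  assumes Z: "Z \<subseteq> {..<n}" and ph: "mono phi" and cc: "c \<le> c'"
  shows "tstat v phi n Z (Ytil m Z (Mobs M1 M0 Z) (Yobs Y1 Y0 Z) (xi n n1 kap Z (Mobs M1 M0 Z) (Yobs Y1 Y0 Z) k c'))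
       \<le> tstat v phi n Z (Ytil m Z (Mobs M1 M0 Z) (Yobs Y1 Y0 Z) (xi n n1 kap Z (Mobs M1 M0 Z) (Yobs Y1 Y0 Z) k c))"
proof (rule mono_stat[OF Z ph])
  let ?Y = "Ytil m Z (Mobs M1 M0 Z) (Yobs Y1 Y0 Z) (xi n n1 kap Z (Mobs M1 M0 Z) (Yobs Y1 Y0 Z) k c)"
  let ?Y' = "Ytil m Z (Mobs M1 M0 Z) (Yobs Y1 Y0 Z) (xi n n1 kap Z (Mobs M1 M0 Z) (Yobs Y1 Y0 Z) k c')"
  have ctrl: "\<forall>j\<in>{..<n} - Z. ?Y' j = ?Y j" by (simp add: Ytil_ctrl)
  have pt: "?Y' i \<le> ?Y i" if "i \<in> Z" for i
    using that cc by (simp add: Ytil_trt xi_def)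
  have "cn n Z ?Y' i \<le> cn n Z ?Y i" if "i \<in> Z" for i
    by (rule cn_cmp[OF ctrl pair_le_same[OF pt[OF that]]])
  then show "\<forall>x. card {i\<in>Z. cn n Z ?Y i \<le> x} \<le> card {i\<in>Z. cn n Z ?Y' i \<le> x}"
    using Z by (intro allI card_mono) (auto simp: finite_subset intro: order_trans)
qed



lemma main_dom:
  assumes Zc: "Z \<in> cre n n1" and k: "k \<in> {1..n1}" and kap: "kap > 0"
    and mp: "m = Mmp \<longrightarrow> (\<forall>i<n. M0 i \<le> M1 i)" and mn: "m = Mmn \<longrightarrow> (\<forall>i<n. M1 i \<le> M0 i)"
    and ph: "mono phi"
  shows "tstat v phi n Z (Ytil m Z (Mobs M1 M0 Z) (Yobs Y1 Y0 Z)
            (xi n n1 kap Z (Mobs M1 M0 Z) (Yobs Y1 Y0 Z) k (tau_sorted (\<lambda>i. Y1 i - Y0 i) Z k)))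
         \<le> tstat v phi n Z (Wv m M0 Y0)"
proof -
  define Mo where "Mo = Mobs M1 M0 Z"
  define Yo where "Yo = Yobs Y1 Y0 Z"
  define c where "c = tau_sorted (\<lambda>i. Y1 i - Y0 i) Z k"
  define J where "J = Jset n Z Mo"
  define L where "L = min (n1 - k) (card J)"
  define A where "A = JL n Z Mo Yo L"
  define B where "B = {i\<in>J. c < Y1 i - Y0 i}"
  define W where "W = Wv m M0 Y0"
  define \<xi> where "\<xi> = Max (Yo ` J) - Min (Yo ` Cobs n Z Mo) + kap"
  define Yt where "Yt = Ytil m Z Mo Yo (xi n n1 kap Z Mo Yo k c)"
  have Zs: "Z \<subseteq> {..<n}" "card Z = n1" using Zc unfolding cre_def by auto
  have finZ: "finite Z" using Zs(1) finite_subset by blast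
  have Jeq: "J = {i\<in>Z. M1 i}" unfolding J_def Jset_def Mo_def Mobs_def using Zs(1) by auto
  have finJ: "finite J" unfolding J_def by (rule finite_Jset)
  have JZ: "J \<subseteq> Z" using Jeq by blast
  have AJ: "A \<subseteq> J" unfolding A_def J_def by (rule JL_sub)
  have BJ: "B \<subseteq> J" unfolding B_def by blast
  have cardA: "card A = L" unfolding A_def J_def L_def by (rule JL_card) (simp add: J_def)
  have cardB: "card B \<le> card A"
  proof -
    have "card B \<le> card J" using finJ BJ by (rule card_mono)
    moreover have "card B \<le> card {i\<in>Z. c < Y1 i - Y0 i}"
      using finZ JZ unfolding B_def by (intro card_mono) auto
    moreover have "card {i\<in>Z. c < Y1 i - Y0 i} \<le> n1 - k"
      unfolding c_def using tau_count[OF finZ Zs(2) k, of "\<lambda>i. Y1 i - Y0 i"] by simp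
    ultimately show ?thesis using cardA L_def by simp
  qed
  have Yo_Z: "Yo i = Y1 i" if "i \<in> Z" for i using that unfolding Yo_def Yobs_def by simp
  have Cobs_eq: "Cobs n Z Mo = {j\<in>{..<n} - Z. M0 j}" unfolding Cobs_def Mo_def Mobs_def by auto
  have Yo_C: "Yo j = Y0 j" if "j \<notin> Z" for j using that unfolding Yo_def Yobs_def by simp
  have xi_eq: "xi n n1 kap Z Mo Yo k c i = (if i \<in> A then \<xi> else c)" for i
    unfolding xi_def A_def L_def J_def \<xi>_def by simp
  have Yt_Z: "Yt i = (if M1 i then ereal (Y1 i - (if i \<in> A then \<xi> else c))
                      else (case m of Mg \<Rightarrow> -\<infinity> | Mmp \<Rightarrow> \<infinity> | Mmn \<Rightarrow> -\<infinity>))" if "i \<in> Z" for i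
    unfolding Yt_def Mo_def Yo_def using Ytil_trt[OF that] xi_eq unfolding Mo_def Yo_def by simp
  have ctrl: "\<forall>j\<in>{..<n} - Z. Yt j = W j"
    unfolding Yt_def W_def Mo_def Yo_def by (simp add: Ytil_ctrl)
  have ctrl_eq: "{j \<in> {..<n} - Z. (Yt j, j) \<le> (Yt i, i)} = {j \<in> {..<n} - Z. (W j, j) \<le> (Yt i, i)}" for i
    using ctrl by auto
  have Wnn: "W l \<noteq> -\<infinity>" if "l \<in> J" for l
  proof -
    have l: "l \<in> Z" "M1 l" using that Jeq by auto
    have "M0 l \<or> m \<noteq> Mmn" using mn l Zs(1) by (auto simp: le_bool_def)
    then show ?thesis unfolding W_def Wv_def by (cases m) auto
  qed
  have goodJ: "ereal (Y1 l - c) \<le> W l" if "l \<in> J" "l \<notin> B" for l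
  proof -
    have l: "l \<in> Z" "M1 l" "Y1 l - Y0 l \<le> c" using that Jeq B_def by auto
    show ?thesis
    proof (cases "M0 l")
      case True then show ?thesis using l unfolding W_def Wv_def by simp
    next
      case False
      then have "m \<noteq> Mmn" using mn l Zs(1) by (auto simp: le_bool_def)
      then show ?thesis using False unfolding W_def Wv_def by (cases m) auto
    qed
  qed
  have pushed: "Y1 i - \<xi> < Y0 j" if "i \<in> A" "j \<in> {..<n} - Z" "M0 j" for i j
  proof -
    have iJ: "i \<in> J" using that AJ by blast
    have jC: "j \<in> Cobs n Z Mo" using that Cobs_eq by simp
    have finC: "finite (Cobs n Z Mo)" unfolding Cobs_def by simp
    have "Yo i \<le> Max (Yo ` J)" using finJ iJ by simp
    moreover have "Min (Yo ` Cobs n Z Mo) \<le> Yo j" using finC jC by simp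
    moreover have "Yo i = Y1 i" using iJ JZ Yo_Z by blast
    moreover have "Yo j = Y0 j" using that Yo_C by blast
    ultimately show ?thesis unfolding \<xi>_def using kap by simp
  qed
  have F1: "cn n Z Yt i \<le> cn n Z W i" if "i \<in> Z - (A \<union> B)" for i
  proof -
    have "Yt i \<le> W i"
    proof (cases "M1 i")
      case True
      then have "i \<in> J" "i \<notin> B" "i \<notin> A" using that Jeq by auto
      then show ?thesis using goodJ[of i] Yt_Z[of i] that True by simp
    next
      case False
      show ?thesis
      proof (cases "m = Mmp")
        case True
        then have "\<not> M0 i" using mp False that Zs(1) by (auto simp: le_bool_def)
        then show ?thesis using Yt_Z[of i] that False True unfolding W_def Wv_def by simp
      next
        case nm: False
        then have "Yt i = -\<infinity>" using Yt_Z[of i] that False by (cases m) auto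
        then show ?thesis by simp
      qed
    qed
    then show ?thesis by (rule cn_cmp[OF ctrl pair_le_same])
  qed
  have F2: "cn n Z Yt i \<le> cn n Z W l" if "i \<in> A" "l \<in> J" for i l
  proof -
    have sub: "{j \<in> {..<n} - Z. (W j, j) \<le> (Yt i, i)} \<subseteq> {j \<in> {..<n} - Z. (W j, j) \<le> (W l, l)}"
    proof
      fix j assume j: "j \<in> {j \<in> {..<n} - Z. (W j, j) \<le> (Yt i, i)}"
      have iZ: "i \<in> Z" "M1 i" using that AJ Jeq by auto
      have Yti: "Yt i = ereal (Y1 i - \<xi>)" using Yt_Z[OF iZ(1)] iZ that by simp
      have le: "W j \<le> Yt i" using j by (auto simp: less_eq_prod_simp)
      have "W j = -\<infinity>"
      proof (cases "M0 j")
        case True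
        then have "W j = ereal (Y0 j)" unfolding W_def Wv_def by simp
        moreover have "Y1 i - \<xi> < Y0 j" using pushed[OF that(1)] j True by simp
        ultimately show ?thesis using le Yti by simp
      next
        case False
        then show ?thesis using le Yti unfolding W_def Wv_def by (cases m) auto
      qed
      then have "W j < W l" using Wnn[OF that(2)] by simp
      then have "(W j, j) \<le> (W l, l)" by (simp add: less_eq_prod_simp)
      then show "j \<in> {j \<in> {..<n} - Z. (W j, j) \<le> (W l, l)}" using j by simp
    qed
    show ?thesis unfolding cn_def ctrl_eq by (rule card_mono[OF _ sub]) simp
  qed
  have F3: "cn n Z Yt i \<le> cn n Z W l" if "i \<in> B - A" "l \<in> A - B" for i l
  proof -
    have iJ: "i \<in> J" "i \<notin> A" using that BJ by auto
    have lJ: "l \<in> J" "l \<in> A" "l \<notin> B" using that AJ by auto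
    have iZ: "i \<in> Z" "M1 i" using iJ Jeq by auto
    have lZ: "l \<in> Z" using lJ JZ by auto
    have "(Yo i, i) < (Yo l, l)"
      using JL_top[of i n Z Mo Yo L l] iJ lJ unfolding A_def J_def by blast
    then have "(Y1 i, i) < (Y1 l, l)" using Yo_Z iZ lZ by simp
    then have "(ereal (Y1 i - c), i) \<le> (ereal (Y1 l - c), l)" by (rule pair_shift)
    also have "\<dots> \<le> (W l, l)" using goodJ[OF lJ(1) lJ(3)] by (rule pair_le_same)
    finally have "(Yt i, i) \<le> (W l, l)" using Yt_Z[OF iZ(1)] iZ iJ by simp
    then show ?thesis by (rule cn_cmp[OF ctrl])
  qed
  have H: "\<forall>x. card {i\<in>Z. cn n Z W i \<le> x} \<le> card {i\<in>Z. cn n Z Yt i \<le> x}"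
  proof
    fix x
    show "card {i\<in>Z. cn n Z W i \<le> x} \<le> card {i\<in>Z. cn n Z Yt i \<le> x}"
    proof (rule thresh_comb[OF finZ _ _ cardB])
      show "A \<subseteq> Z" using AJ JZ by blast
      show "B \<subseteq> Z" using BJ JZ by blast
      show "\<forall>i\<in>Z - (A \<union> B). cn n Z Yt i \<le> cn n Z W i" using F1 by blast
      show "\<forall>i\<in>A. \<forall>l\<in>A \<union> B. cn n Z Yt i \<le> cn n Z W l" using F2 AJ BJ by blast
      show "\<forall>i\<in>B - A. \<forall>l\<in>A - B. cn n Z Yt i \<le> cn n Z W l" using F3 by blast
    qed
  qed
  have "tstat v phi n Z Yt \<le> tstat v phi n Z W" by (rule mono_stat[OF Zs(1) ph H])
  then show ?thesis unfolding Yt_def W_def Mo_def Yo_def c_def .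
qed



lemma prob_mono_pred:
  assumes "\<forall>Z\<in>cre n n1. P Z \<longrightarrow> P' Z"
  shows "prob_cre n n1 P \<le> prob_cre n n1 P'"
proof -
  have "card {z\<in>cre n n1. P z} \<le> card {z\<in>cre n n1. P' z}"
    using assms finite_cre by (intro card_mono) auto
  then show ?thesis unfolding prob_cre_def by (simp add: divide_right_mono)
qed

lemma prob_compl:
  assumes "n1 \<le> n" "\<forall>Z\<in>cre n n1. \<not> Q Z \<longrightarrow> P Z"
  shows "1 - prob_cre n n1 Q \<le> prob_cre n n1 P"
proof -
  let ?N = "card (cre n n1)"
  have Npos: "0 < ?N" using card_cre_pos[OF assms(1)] .
  have "cre n n1 \<subseteq> {z\<in>cre n n1. P z} \<union> {z\<in>cre n n1. Q z}" using assms(2) by blast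
  then have "?N \<le> card ({z\<in>cre n n1. P z} \<union> {z\<in>cre n n1. Q z})"
    using finite_cre by (intro card_mono) auto
  also have "\<dots> \<le> card {z\<in>cre n n1. P z} + card {z\<in>cre n n1. Q z}" by (rule card_Un_le)
  finally have "real ?N \<le> real (card {z\<in>cre n n1. P z}) + real (card {z\<in>cre n n1. Q z})" by linarith
  then have "1 \<le> real (card {z\<in>cre n n1. P z}) / real ?N + real (card {z\<in>cre n n1. Q z}) / real ?N"
    using Npos by (simp add: add_divide_distrib[symmetric] le_divide_eq)
  then show ?thesis unfolding prob_cre_def by simp
qed

lemma G_anti: "s \<le> t \<Longrightarrow> Gfun v phi n n1 y0 t \<le> Gfun v phi n n1 y0 s"
  unfolding Gfun_def by (rule prob_mono_pred) auto

theorem theorem7: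
  fixes n n1 n0 :: nat and Y1 Y0 :: "nat \<Rightarrow> real" and M1 M0 :: "nat \<Rightarrow> bool"
    and m :: mech and v :: bool and phi :: "nat \<Rightarrow> real" and y0 :: "nat \<Rightarrow> real"
    and kap alpha :: real
  assumes "n1 \<ge> 1" and "n0 \<ge> 1" and "n1 + n0 = n"
    and "mono phi"
    and "kap > 0"
    and "0 < alpha" and "alpha < 1"
    and "m = Mmp \<longrightarrow> (\<forall>i<n. M0 i \<le> M1 i)"
    and "m = Mmn \<longrightarrow> (\<forall>i<n. M1 i \<le> M0 i)"
  defines "tau \<equiv> \<lambda>i. Y1 i - Y0 i"
    and "I \<equiv> \<lambda>Z k. {c::real. pval v phi n n1 y0 m kap (Mobs M1 M0 Z) (Yobs Y1 Y0 Z) Z k c > alpha}"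
  shows "(\<forall>k\<in>{1..n1}. prob_cre n n1 (\<lambda>Z. tau_sorted tau Z k \<in> I Z k) \<ge> 1 - alpha)
       \<and> (\<forall>Z\<in>cre n n1. \<forall>k\<in>{1..n1}.
            I Z k = {c. Inf (ereal ` I Z k) \<le> ereal c} \<or> I Z k = {c. Inf (ereal ` I Z k) < ereal c})
       \<and> prob_cre n n1 (\<lambda>Z. \<forall>k\<in>{1..n1}. tau_sorted tau Z k \<in> I Z k) \<ge> 1 - alpha"
proof -
  have n1n: "n1 \<le> n" using assms(3) by simp
  define W where "W = Wv m M0 Y0"
  define X where "X Z = tstat v phi n Z W" for Z
  define Q where "Q Z = (prob_cre n n1 (\<lambda>a. X Z \<le> X a) \<le> alpha)" for Z
  define Yt where "Yt Z k c = Ytil m Z (Mobs M1 M0 Z) (Yobs Y1 Y0 Z) (xi n n1 kap Z (Mobs M1 M0 Z) (Yobs Y1 Y0 Z) k c)" for Z k c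
  have Gx: "Gfun v phi n n1 y0 t = prob_cre n n1 (\<lambda>a. t \<le> X a)" for t
    unfolding X_def by (rule G_eq)
  have valQ: "prob_cre n n1 Q \<le> alpha" unfolding Q_def using valid[OF n1n] assms(6) by simp
  have pv: "pval v phi n n1 y0 m kap (Mobs M1 M0 Z) (Yobs Y1 Y0 Z) Z k c = Gfun v phi n n1 y0 (tstat v phi n Z (Yt Z k c))" for Z k c
    unfolding pval_def Yt_def by simp
  have Ieq: "I Z k = {c. alpha < Gfun v phi n n1 y0 (tstat v phi n Z (Yt Z k c))}" for Z k
    unfolding I_def pv by simp
  have inI: "tau_sorted tau Z k \<in> I Z k" if Z: "Z \<in> cre n n1" and k: "k \<in> {1..n1}" and nQ: "\<not> Q Z" for Z k
  proof -
    have "tstat v phi n Z (Yt Z k (tau_sorted tau Z k)) \<le> X Z"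
      unfolding Yt_def X_def W_def tau_def by (rule main_dom[OF Z k assms(5) assms(8) assms(9) assms(4)])
    then have "Gfun v phi n n1 y0 (X Z) \<le> Gfun v phi n n1 y0 (tstat v phi n Z (Yt Z k (tau_sorted tau Z k)))"
      by (rule G_anti)
    moreover have "alpha < Gfun v phi n n1 y0 (X Z)" using nQ unfolding Q_def Gx by simp
    ultimately show ?thesis unfolding Ieq by simp
  qed
  have c3: "prob_cre n n1 (\<lambda>Z. \<forall>k\<in>{1..n1}. tau_sorted tau Z k \<in> I Z k) \<ge> 1 - alpha"
  proof -
    have "1 - prob_cre n n1 Q \<le> prob_cre n n1 (\<lambda>Z. \<forall>k\<in>{1..n1}. tau_sorted tau Z k \<in> I Z k)"
      using inI by (intro prob_compl[OF n1n]) blast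
    then show ?thesis using valQ by simp
  qed
  have c1: "\<forall>k\<in>{1..n1}. prob_cre n n1 (\<lambda>Z. tau_sorted tau Z k \<in> I Z k) \<ge> 1 - alpha"
  proof
    fix k assume k: "k \<in> {1..n1}"
    have "prob_cre n n1 (\<lambda>Z. \<forall>k\<in>{1..n1}. tau_sorted tau Z k \<in> I Z k) \<le> prob_cre n n1 (\<lambda>Z. tau_sorted tau Z k \<in> I Z k)"
      using k by (intro prob_mono_pred) blast
    then show "prob_cre n n1 (\<lambda>Z. tau_sorted tau Z k \<in> I Z k) \<ge> 1 - alpha" using c3 by simp
  qed
  have c2: "\<forall>Z\<in>cre n n1. \<forall>k\<in>{1..n1}.
            I Z k = {c. Inf (ereal ` I Z k) \<le> ereal c} \<or> I Z k = {c. Inf (ereal ` I Z k) < ereal c}"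
  proof (intro ballI)
    fix Z k assume Z: "Z \<in> cre n n1" and k: "k \<in> {1..n1}"
    have Zs: "Z \<subseteq> {..<n}" using Z unfolding cre_def by auto
    show "I Z k = {c. Inf (ereal ` I Z k) \<le> ereal c} \<or> I Z k = {c. Inf (ereal ` I Z k) < ereal c}"
    proof (rule upclosed_interval)
      fix c c' assume c: "c \<in> I Z k" and cc: "c \<le> c'"
      have "tstat v phi n Z (Yt Z k c') \<le> tstat v phi n Z (Yt Z k c)"
        unfolding Yt_def by (rule mono_c[OF Zs assms(4) cc])
      then have "Gfun v phi n n1 y0 (tstat v phi n Z (Yt Z k c)) \<le> Gfun v phi n n1 y0 (tstat v phi n Z (Yt Z k c'))"
        by (rule G_anti)
      then show "c' \<in> I Z k" using c unfolding Ieq by simp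
    qed
  qed
  show ?thesis using c1 c2 c3 by blast
qed


end
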